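(* Let $U$ be an open subset of $\mathbb{R}^n$ with the Euclidean metric $d$, and let $C\subset\mathbb{R}^n$ be a metric coordinatizing set for $U$ with respect to $d$. Let $\phi:(t_1,t_2)\to U$ be a continuous curve and $t\in(t_1,t_2)$ with $\phi(t)\notin C$. Then $\phi$ is differentiable at $t$ (in the usual sense) if and only if $\phi$ is metric-coordinate-wise differentiable at $t$, i.e. for every $c\in C$ the function $s\mapsto\phi_c(s):=d(\phi(s),c)$ is differentiable at $s=t$.
   Context: A set $C\subset\mathbb{R}^n$ is a metric coordinatizing set for $U\subset\mathbb{R}^n$ if for all $x,y\in U$ with $x\neq y$ there is $c\in C$ with $d(x,c)\neq d(y,c)$. *)

theory Defs
  imports "HOL-Analysis.Analysis"
begin

definition metric_coordinatizing :: "'a::metric_space set \<Rightarrow> 'a set \<Rightarrow> bool" where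
  "metric_coordinatizing C U \<longleftrightarrow>
     (\<forall>x\<in>U. \<forall>y\<in>U. x \<noteq> y \<longrightarrow> (\<exists>c\<in>C. dist x c \<noteq> dist y c))"

end

theory Submission
  imports Defs
begin

lemma sqrt_comp_differentiable:
  fixes H :: "real \<Rightarrow> real"
  assumes "H differentiable (at t)" "H t > 0"
  shows "(\<lambda>s. sqrt (H s)) differentiable (at t)"
proof -
  have "sqrt differentiable (at (H t))"
    using DERIV_real_sqrt[OF assms(2)] real_differentiable_def
    by (metis differentiableI has_field_derivative_imp_has_derivative)
  then show ?thesis using differentiable_compose[OF _ assms(1)] by blast
qed

lemma main_dir:
  fixes U C :: "'a::euclidean_space set" and \<phi> :: "real \<Rightarrow> 'a"
  assumes U: "open U" and mc: "metric_coordinatizing C U" and x0U: "\<phi> t \<in> U"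
    and cont: "isCont \<phi> t"
    and D: "\<forall>c\<in>C. (\<lambda>s. dist (\<phi> s) c) differentiable (at t)"
  shows "\<phi> differentiable (at t)"
proof -
  define x0 where "x0 = \<phi> t"
  obtain e where e: "e > 0" "ball x0 e \<subseteq> U" using U x0U open_contains_ball x0_def by blast
  have key: False if w: "w \<noteq> 0" and wC: "\<forall>c\<in>C. inner (c - c0) w = 0"
    and wx: "inner (x0 - c0) w = 0" for w c0
  proof -
    define s where "s = e / (2 * norm w)"
    have s: "s > 0" using e w by (simp add: s_def)
    have nsw: "norm (s *\<^sub>R w) = e / 2" using w e by (simp add: s_def)
    have "x0 + s *\<^sub>R w \<in> U" "x0 - s *\<^sub>R w \<in> U"
      using e nsw by (auto simp: dist_norm intro!: subsetD[OF e(2)])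
    moreover have "x0 + s *\<^sub>R w \<noteq> x0 - s *\<^sub>R w"
    proof
      assume "x0 + s *\<^sub>R w = x0 - s *\<^sub>R w"
      then have "(x0 + s *\<^sub>R w) - (x0 - s *\<^sub>R w) = 0" by simp
      moreover have "(x0 + s *\<^sub>R w) - (x0 - s *\<^sub>R w) = (2 * s) *\<^sub>R w"
        by (simp add: scaleR_add_left[symmetric])
      ultimately show False using s w by simp
    qed
    moreover have "dist (x0 + s *\<^sub>R w) c = dist (x0 - s *\<^sub>R w) c" if c: "c \<in> C" for c
    proof -
      have "inner (c - c0) w = 0" using wC c by blast
      then have i: "inner x0 w = inner c w" using wx by (simp add: inner_diff_left)
      have "(dist (x0 + s *\<^sub>R w) c)^2 = (dist (x0 - s *\<^sub>R w) c)^2"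
        unfolding dist_norm power2_norm_eq_inner
        by (simp add: inner_diff_left inner_diff_right inner_add_left inner_add_right i inner_commute[of w x0] inner_commute[of w c])
      then show ?thesis by (simp add: power2_eq_iff_nonneg)
    qed
    ultimately show False using mc unfolding metric_coordinatizing_def by metis
  qed
  have "C \<noteq> {}"
  proof
    assume "C = {}"
    obtain b :: 'a where "b \<in> Basis" using nonempty_Basis by blast
    then have "b \<noteq> 0" by auto
    then show False using key[of b x0] \<open>C = {}\<close> by simp
  qed
  then obtain c0 where c0: "c0 \<in> C" by blast
  define V where "V = span ((\<lambda>c. c - c0) ` C)"
  have sq: "(\<lambda>s. (dist (\<phi> s) c)^2) differentiable (at t)" if "c \<in> C" for c
    using D that by simp
  have lin: "(\<lambda>s. inner (\<phi> s) (c - c0)) differentiable (at t)" if c: "c \<in> C" for c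
  proof -
    have eq: "(\<lambda>s. inner (\<phi> s) (c - c0)) =
      (\<lambda>s. ((dist (\<phi> s) c0)^2 - (dist (\<phi> s) c)^2 + (norm c)^2 - (norm c0)^2) / 2)"
      unfolding dist_norm power2_norm_eq_inner
      by (rule ext) (simp add: inner_diff_left inner_diff_right inner_commute)
    show ?thesis unfolding eq using sq[OF c] sq[OF c0] by simp
  qed
  have subW: "subspace {w. (\<lambda>s. inner (\<phi> s) w) differentiable (at t)}"
    unfolding subspace_def by (simp add: inner_add_right)
  have linV: "(\<lambda>s. inner (\<phi> s) w) differentiable (at t)" if "w \<in> V" for w
  proof -
    have "(\<lambda>c. c - c0) ` C \<subseteq> {w. (\<lambda>s. inner (\<phi> s) w) differentiable (at t)}"
      using lin by auto
    then have "V \<subseteq> {w. (\<lambda>s. inner (\<phi> s) w) differentiable (at t)}"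
      unfolding V_def using subW span_minimal by blast
    then show ?thesis using that by blast
  qed
  have subV: "subspace V" by (simp add: V_def)
  obtain B where B: "B \<subseteq> V" "pairwise orthogonal B" "\<And>x. x\<in>B \<Longrightarrow> norm x = 1"
    "independent B" "span B = V"
    using orthonormal_basis_subspace[OF subV] by metis
  have finB: "finite B" using B(4) by (simp add: finiteI_independent)
  define P where "P x = (\<Sum>b\<in>B. inner x b *\<^sub>R b)" for x
  have PV: "P x \<in> V" for x
    unfolding P_def B(5)[symmetric] by (intro span_sum span_mul span_base)
  have QB: "inner (x - P x) b = 0" if b: "b \<in> B" for x b
  proof -
    have "inner (P x) b = (\<Sum>b'\<in>B. inner x b' * inner b' b)"
      unfolding P_def by (simp add: inner_sum_left)
    also have "\<dots> = (\<Sum>b'\<in>B. if b' = b then inner x b else 0)"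
    proof (rule sum.cong)
      fix b' assume "b' \<in> B"
      then show "inner x b' * inner b' b = (if b' = b then inner x b else 0)"
        using B(2,3) b unfolding pairwise_def orthogonal_def
        by (auto simp: norm_eq_1[symmetric] dest: B(3))
    qed simp
    also have "\<dots> = inner x b" using finB b by simp
    finally show ?thesis by (simp add: inner_diff_left)
  qed
  have Qorth: "inner y (x - P x) = 0" if "y \<in> V" for x y
  proof -
    have "orthogonal (x - P x) y"
      using that unfolding B(5)[symmetric]
      by (rule orthogonal_to_span) (simp add: orthogonal_def QB)
    then show ?thesis by (simp add: orthogonal_def inner_commute)
  qed
  define \<psi> where "\<psi> s = \<phi> s - c0" for s
  have Pdiff: "(\<lambda>s. P (\<psi> s)) differentiable (at t)"
  proof -
    have "\<forall>b\<in>B. (\<lambda>s. inner (\<psi> s) b *\<^sub>R b) differentiable (at t)"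
      using linV B(1) by (auto simp: \<psi>_def inner_diff_left)
    then show ?thesis unfolding P_def
      using differentiable_sum[OF finB, of "\<lambda>b s. inner (\<psi> s) b *\<^sub>R b"] by simp
  qed
  show ?thesis
  proof (cases "\<exists>v. v \<noteq> 0 \<and> (\<forall>y\<in>V. inner y v = 0)")
    case False
    then have "\<psi> s - P (\<psi> s) = 0" for s using Qorth by blast
    then have "\<phi> = (\<lambda>s. P (\<psi> s) + c0)" by (auto simp: \<psi>_def algebra_simps)
    then show ?thesis using Pdiff by simp
  next
    case True
    then obtain v0 where v0: "v0 \<noteq> 0" "\<forall>y\<in>V. inner y v0 = 0" by blast
    define v where "v = v0 /\<^sub>R norm v0"
    have nv1: "norm v = 1" using v0 by (simp add: v_def)
    then have nv: "norm v = 1" "inner v v = 1" by (auto simp: norm_eq_1[symmetric])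
    have vV: "inner y v = 0" if "y \<in> V" for y using v0 that by (simp add: v_def)
    have CV: "c - c0 \<in> V" if "c \<in> C" for c using that by (simp add: V_def span_base)
    have hx0: "inner (x0 - c0) v \<noteq> 0"
    proof
      assume a: "inner (x0 - c0) v = 0"
      have "v \<noteq> 0" using nv by auto
      moreover have "\<forall>c\<in>C. inner (c - c0) v = 0" using vV CV by blast
      ultimately show False using key[of v c0] a by blast
    qed
    have mult: "w = inner w v *\<^sub>R v" if wV: "\<forall>y\<in>V. inner y w = 0" for w
    proof -
      define a where "a = inner (x0 - c0) v"
      define b where "b = inner (x0 - c0) w"
      define w' where "w' = a *\<^sub>R w - b *\<^sub>R v"
      have "inner y w' = 0" if "y \<in> V" for y
        using wV vV that by (simp add: w'_def inner_diff_right)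
      moreover have "inner (x0 - c0) w' = 0"
        by (simp add: w'_def a_def b_def inner_diff_right)
      moreover have "\<forall>c\<in>C. inner (c - c0) w' = 0" using CV calculation by blast
      ultimately have "w' = 0" using key[of w' c0] by blast
      then have e1: "a *\<^sub>R w = b *\<^sub>R v" by (simp add: w'_def)
      have "w = inverse a *\<^sub>R (a *\<^sub>R w)" using hx0 by (simp add: a_def)
      also have "\<dots> = (b / a) *\<^sub>R v" unfolding e1 by (simp add: divide_inverse mult.commute)
      finally have w: "w = (b / a) *\<^sub>R v" .
      then have "inner w v = b / a" using nv by simp
      then show ?thesis using w by simp
    qed
    define h where "h s = inner (\<psi> s) v" for s
    have decomp: "\<psi> s = P (\<psi> s) + h s *\<^sub>R v" for s
    proof -
      have "\<psi> s - P (\<psi> s) = inner (\<psi> s - P (\<psi> s)) v *\<^sub>R v"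
        using mult Qorth by blast
      also have "inner (\<psi> s - P (\<psi> s)) v = h s"
        using vV[OF PV] by (simp add: h_def inner_diff_left)
      finally show ?thesis by (simp add: algebra_simps)
    qed
    have hsq: "(h s)^2 = (norm (\<psi> s))^2 - inner (P (\<psi> s)) (P (\<psi> s))" for s
    proof -
      have "(norm (\<psi> s))^2 = inner (P (\<psi> s) + h s *\<^sub>R v) (P (\<psi> s) + h s *\<^sub>R v)"
        using decomp[of s] by (metis power2_norm_eq_inner)
      also have "\<dots> = inner (P (\<psi> s)) (P (\<psi> s)) + (h s)^2"
        using vV[OF PV] nv
        by (simp add: inner_add_left inner_add_right inner_commute power2_eq_square)
      finally show ?thesis by simp
    qed
    have nd: "(\<lambda>s. (norm (\<psi> s))^2) differentiable (at t)"
      using sq[OF c0] by (simp add: \<psi>_def dist_norm)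
    have Hd: "(\<lambda>s. (h s)^2) differentiable (at t)"
      unfolding hsq using nd Pdiff by simp
    have hcont: "isCont h t"
      unfolding h_def \<psi>_def using cont by (intro continuous_intros)
    have ht: "h t \<noteq> 0" using hx0 by (simp add: h_def \<psi>_def x0_def)
    then have "abs (h t) > 0" by simp
    then obtain d where d: "d > 0" "\<And>s. dist s t < d \<Longrightarrow> dist (h s) (h t) < abs (h t)"
      using hcont unfolding continuous_at_eps_delta by blast
    have g: "sgn (h t) * \<bar>h s\<bar> = h s" if "dist s t < d" for s
    proof -
      have "dist (h s) (h t) < abs (h t)" using d that by blast
      then have "\<bar>h s - h t\<bar> < \<bar>h t\<bar>" by (simp add: dist_real_def)
      then have "sgn (h s) = sgn (h t)"
        by (cases "h t > 0") (auto simp: sgn_if)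
      then show ?thesis by (metis sgn_mult_abs)
    qed
    have "(\<lambda>s. sgn (h t) * sqrt ((h s)^2)) differentiable (at t)"
      using sqrt_comp_differentiable[OF Hd] ht by simp
    then have hd: "h differentiable (at t)"
      by (rule differentiable_transform_within[where s=UNIV, OF _ d(1)]) (auto simp: g)
    have "\<phi> = (\<lambda>s. P (\<psi> s) + h s *\<^sub>R v + c0)"
      using decomp by (auto simp: \<psi>_def algebra_simps fun_eq_iff)
    then show ?thesis using Pdiff hd by simp
  qed
qed

theorem theorem4p1:
  fixes U C :: "(real ^ 'n) set" and \<phi> :: "real \<Rightarrow> real ^ 'n"
    and t1 t2 t :: real
  assumes "open U"
    and "metric_coordinatizing C U"
    and "\<phi> ` {t1<..<t2} \<subseteq> U"
    and "continuous_on {t1<..<t2} \<phi>"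
    and "t \<in> {t1<..<t2}"
    and "\<phi> t \<notin> C"
  shows "\<phi> differentiable (at t) \<longleftrightarrow>
         (\<forall>c\<in>C. (\<lambda>s. dist (\<phi> s) c) differentiable (at t))"
proof
  assume d: "\<phi> differentiable (at t)"
  show "\<forall>c\<in>C. (\<lambda>s. dist (\<phi> s) c) differentiable (at t)"
  proof
    fix c assume "c \<in> C"
    then have "\<phi> t - c \<noteq> 0" using assms(6) by auto
    then have "norm differentiable (at ((\<lambda>s. \<phi> s - c) t))" by simp
    moreover have "(\<lambda>s. \<phi> s - c) differentiable (at t)" using d by simp
    ultimately show "(\<lambda>s. dist (\<phi> s) c) differentiable (at t)"
      unfolding dist_norm by (rule differentiable_compose)
  qed
next
  assume "\<forall>c\<in>C. (\<lambda>s. dist (\<phi> s) c) differentiable (at t)"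
  moreover have "isCont \<phi> t"
    by (metis assms(4) assms(5) continuous_on_eq_continuous_at open_greaterThanLessThan)
  ultimately show "\<phi> differentiable (at t)"
    using main_dir[OF assms(1,2)] assms(3,5) by blast
qed

end
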